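(* For every $y>0$, the function $H_a(y)=\Gamma(a,y)/\Gamma(a-1,y)$ is increasing as a function of $a\in\mathbb{R}$.
   Context: $\Gamma(a,y)=\int_y^{\infty} t^{a-1}e^{-t}\,dt$ is the upper incomplete gamma function, defined for all real $a$ when $y>0$. *)

theory Defs
  imports "HOL-Analysis.Analysis"
begin

definition upper_inc_Gamma :: "real \<Rightarrow> real \<Rightarrow> real" where
  "upper_inc_Gamma a y = integral {y..} (\<lambda>t. t powr (a - 1) * exp (- t))"

definition H_ratio :: "real \<Rightarrow> real \<Rightarrow> real" where
  "H_ratio a y = upper_inc_Gamma a y / upper_inc_Gamma (a - 1) y"

end

theory Submission
  imports Defs
begin

definition FF :: "real \<Rightarrow> real \<Rightarrow> real" where
  "FF c t = t powr c * exp (- t)"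

lemma FF_cont: "continuous_on {y..} (FF c)" if "y > 0" for y
  unfolding FF_def using that
  by (intro continuous_intros) auto

lemma FF_integrable:
  assumes y: "y > 0"
  shows "FF c integrable_on {y..}"
proof -
  define n :: nat where "n = nat \<lceil>\<bar>c\<bar>\<rceil> + 1"
  have n0: "n > 0" by (simp add: n_def)
  have cn: "c \<le> real n" unfolding n_def by linarith
  define K where "K = y powr (c - real n) * (2 * real n) ^ n"
  have bound: "norm (FF c t) \<le> K * exp (- (1/2) * t)" if t: "t \<in> {y..}" for t
  proof -
    have t0: "t > 0" using t y by auto
    have "t powr c = t powr (c - real n) * t ^ n"
      using t0 by (simp add: powr_diff powr_realpow)
    also have "\<dots> \<le> y powr (c - real n) * t ^ n"
      by (intro mult_right_mono powr_mono2') (use t y cn in auto)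
    finally have A: "t powr c \<le> y powr (c - real n) * t ^ n" .
    have "(t / (2 * real n)) ^ n \<le> (1 + (t/2) / real n) ^ n"
      using t0 n0 by (intro power_mono) auto
    also have "\<dots> \<le> exp (t/2)"
      by (rule exp_ge_one_plus_x_over_n_power_n) (use t0 n0 in auto)
    finally have "(t / (2 * real n)) ^ n \<le> exp (t/2)" .
    hence B: "t ^ n \<le> (2 * real n) ^ n * exp (t/2)"
      using n0 by (simp add: power_divide field_simps)
    have "norm (FF c t) = t powr c * exp (- t)" unfolding FF_def by simp
    also have "\<dots> \<le> y powr (c - real n) * ((2 * real n) ^ n * exp (t/2)) * exp (-t)"
      using A B by (intro mult_right_mono order.trans[OF A] mult_left_mono) auto
    also have "\<dots> = K * (exp (t/2) * exp (-t))" unfolding K_def by simp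
    also have "exp (t/2) * exp (-t) = exp (- (1/2) * t)"
      by (simp flip: exp_add)
    finally show ?thesis .
  qed
  show ?thesis
  proof (rule measurable_bounded_by_integrable_imp_integrable)
    show "FF c \<in> borel_measurable (lebesgue_on {y..})"
      by (rule continuous_imp_measurable_on_sets_lebesgue) (use FF_cont y in auto)
    show "(\<lambda>t. K * exp (- (1/2) * t)) integrable_on {y..}"
      using integrable_on_cmult_left[OF integrable_on_exp_minus_to_infinity[of "1/2" y], of K]
      by simp
  qed (use bound in auto)
qed

lemma pos_integral:
  fixes h :: "real \<Rightarrow> real"
  assumes "h integrable_on {y..}" "\<And>t. t \<ge> y \<Longrightarrow> h t \<ge> 0"
    "continuous_on {z..z+1} h" "z \<ge> y" "\<And>t. t \<in> {z<..<z+1} \<Longrightarrow> h t > 0"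
  shows "integral {y..} h > 0"
proof -
  have "integral {z..z+1} (\<lambda>_. 0::real) < integral {z..z+1} h"
    by (rule integral_less_real) (use assms in auto)
  hence "0 < integral {z..z+1} h" by simp
  also have "\<dots> \<le> integral {y..} h"
    by (rule integral_subset_le)
       (use assms in \<open>auto intro: integrable_continuous_interval\<close>)
  finally show ?thesis .
qed

lemma Gamma_pos: "y > 0 \<Longrightarrow> integral {y..} (FF c) > 0"
  apply (rule pos_integral[where z=y])
  using FF_integrable[of y c] FF_cont[of y c]
  by (auto simp: FF_def intro: continuous_on_subset)

theorem theorem9:
  fixes y :: real
  assumes "y > 0"
  shows "strict_mono (\<lambda>a. H_ratio a y)"
proof (rule strict_monoI)
  fix a b :: real
  assume ab: "a < b"
  have G: "upper_inc_Gamma a y = integral {y..} (FF (a - 1))" for a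
    unfolding upper_inc_Gamma_def FF_def ..
  define d where "d = b - a"
  have d: "d > 0" using ab by (simp add: d_def)
  define A1 where "A1 = integral {y..} (FF (a - 1))"
  define A2 where "A2 = integral {y..} (FF (a - 2))"
  define B1 where "B1 = integral {y..} (FF (b - 1))"
  define B2 where "B2 = integral {y..} (FF (b - 2))"
  have A1p: "A1 > 0" "A2 > 0" "B1 > 0" "B2 > 0"
    unfolding A1_def A2_def B1_def B2_def using Gamma_pos assms by auto
  define m where "m = A1 / A2"
  have m: "m > 0" using A1p by (simp add: m_def)
  define h where "h t = (t - m) * FF (a - 2) t * (t powr d - m powr d)" for t
  have heq: "h t = (FF (b - 1) t - m * FF (b - 2) t) - m powr d * (FF (a - 1) t - m * FF (a - 2) t)"
    if "t \<in> {y..}" for t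
  proof -
    have t0: "t > 0" using that assms by auto
    have e1: "t powr (a - 2) * t powr d = t powr (b - 2)"
      by (simp add: powr_add[symmetric] d_def)
    have e2: "t * t powr (a - 2) = t powr (a - 1)"
      using t0 by (simp add: powr_add[symmetric] powr_mult_base)
    have e3: "t * t powr (b - 2) = t powr (b - 1)"
      using t0 by (simp add: powr_add[symmetric] powr_mult_base)
    show ?thesis unfolding h_def FF_def
      by (simp add: algebra_simps e1 e3[symmetric] e2[symmetric] flip: e1)
  qed
  have I: "\<And>c. FF c integrable_on {y..}" using FF_integrable assms by auto
  have i1: "(\<lambda>t. m *\<^sub>R FF c t) integrable_on {y..}" for c
    by (intro integrable_cmul I)
  have i2: "(\<lambda>t. FF c t - m *\<^sub>R FF c' t) integrable_on {y..}" for c c'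
    by (intro integrable_diff I i1)
  have i3: "(\<lambda>t. m powr d *\<^sub>R (FF c t - m *\<^sub>R FF c' t)) integrable_on {y..}" for c c'
    by (intro integrable_cmul i2)
  have i4: "(\<lambda>t. (FF (b - 1) t - m * FF (b - 2) t) - m powr d * (FF (a - 1) t - m * FF (a - 2) t)) integrable_on {y..}"
    using integrable_diff[OF i2 i3] by simp
  have "integral {y..} h = (B1 - m * B2) - m powr d * (A1 - m * A2)"
  proof -
    have "integral {y..} h = integral {y..} (\<lambda>t. (FF (b - 1) t - m *\<^sub>R FF (b - 2) t) - m powr d *\<^sub>R (FF (a - 1) t - m *\<^sub>R FF (a - 2) t))"
      by (rule integral_cong) (simp add: heq)
    also have "\<dots> = (B1 - m * B2) - m powr d * (A1 - m * A2)"
    proof -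
      show ?thesis
        apply (subst integral_diff[OF i2 i3])
        apply (subst integral_cmul)
        apply (subst integral_diff[OF I i1])+
        apply (subst integral_cmul)+
        by (simp add: A1_def A2_def B1_def B2_def)
    qed
    finally show ?thesis .
  qed
  also have "A1 - m * A2 = 0" using A1p by (simp add: m_def)
  finally have hI: "integral {y..} h = B1 - m * B2" by simp
  have hpos: "integral {y..} h > 0"
  proof (rule pos_integral[where z = "max y m + 1"])
    show "h integrable_on {y..}"
      using i4 by (subst integrable_cong[where g = "\<lambda>t. (FF (b - 1) t - m * FF (b - 2) t) - m powr d * (FF (a - 1) t - m * FF (a - 2) t)"]) (simp_all add: heq)
    show "h t \<ge> 0" if "t \<ge> y" for t
    proof -
      have t0: "t > 0" using that assms by auto
      have "FF (a - 2) t > 0" unfolding FF_def using t0 by simp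
      moreover have "(t - m) * (t powr d - m powr d) \<ge> 0"
      proof (cases "t \<ge> m")
        case True
        hence "t powr d \<ge> m powr d" using d m by (intro powr_mono2) auto
        thus ?thesis using True by simp
      next
        case False
        hence "t powr d \<le> m powr d" using d t0 by (intro powr_mono2) auto
        thus ?thesis using False by (simp add: mult_nonpos_nonpos)
      qed
      ultimately show ?thesis unfolding h_def
        by (metis mult.commute mult.left_commute mult_nonneg_nonneg less_imp_le)
    qed
    show "continuous_on {max y m + 1..max y m + 1 + 1} h"
      unfolding h_def FF_def using m assms
      by (intro continuous_intros) auto
    show "h t > 0" if "t \<in> {max y m + 1<..<max y m + 1 + 1}" for t
    proof -
      have t: "t > m" "t > 0" using that m by auto
      have "t powr d > m powr d" using d m t by (intro powr_less_mono2) auto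
      moreover have "FF (a - 2) t > 0" unfolding FF_def using t by simp
      ultimately show ?thesis unfolding h_def using t by simp
    qed
  qed auto
  hence "B1 > m * B2" using hI by simp
  hence "B1 / B2 > m" using A1p by (simp add: field_simps)
  thus "H_ratio a y < H_ratio b y"
    unfolding H_ratio_def G m_def A1_def A2_def B1_def B2_def
    by (simp add: algebra_simps)
qed

end
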